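(* Let $0<\mu<\nu<1/2$. For $t,\tau\in(0,1)$, $\xi\in\mathbb R$, let $D_4=D_4(\tau,\xi)=\{(\xi_1,\xi_2,\xi_3)\in\mathbb R^3:\ \xi_1+\xi_2+\xi_3=\xi,\ |\xi_1|+|\xi_2|+|\xi_3|<\tau^{-1/3}\}$. Then for all $f,g\in L^\infty(\mathbb R)$ and $h$ with $\langle\xi\rangle^\nu h\in L^\infty$, $$\Big\|\xi\int_{D_4}e^{it\Phi}f(\xi_1)g(\xi_2)h(\xi_3)\,d\xi_1d\xi_2\Big\|_{L^\infty_\mu}\lesssim\tau^{-1+\frac{\nu-\mu}{3}}\|f\|_{L^\infty}\|g\|_{L^\infty}\|h\|_{L^\infty_\nu}.$$
   Context: $\Phi=\xi^3-\xi_1^3-\xi_2^3-\xi_3^3$ with $\xi_3=\xi-\xi_1-\xi_2$ (the integral is over the plane $\xi_1+\xi_2+\xi_3=\xi$ parametrized by $(\xi_1,\xi_2)$). $\langle\xi\rangle=(1+\xi^2)^{1/2}$, $\|v\|_{L^\infty_\mu}=\|\langle\xi\rangle^\mu v(\xi)\|_{L^\infty_\xi}$, the $L^\infty_\mu$ norm on the left being taken in $\xi$. Implicit constants depend only on $\mu,\nu$. *)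

theory Defs
  imports "HOL-Analysis.Analysis"
begin

definition japanese :: "real \<Rightarrow> real" where
  "japanese x = sqrt (1 + x\<^sup>2)"

definition Phi :: "real \<Rightarrow> real \<Rightarrow> real \<Rightarrow> real" where
  "Phi \<xi> \<xi>1 \<xi>2 = \<xi>^3 - \<xi>1^3 - \<xi>2^3 - (\<xi> - \<xi>1 - \<xi>2)^3"

text \<open>The region \<open>D_4(\<tau>,\<xi>)\<close>, parametrised by \<open>(\<xi>1,\<xi>2)\<close> on the plane \<open>\<xi>1+\<xi>2+\<xi>3=\<xi>\<close>.\<close>
definition D4 :: "real \<Rightarrow> real \<Rightarrow> (real \<times> real) set" where
  "D4 \<tau> \<xi> = {(\<xi>1, \<xi>2). \<bar>\<xi>1\<bar> + \<bar>\<xi>2\<bar> + \<bar>\<xi> - \<xi>1 - \<xi>2\<bar> < \<tau> powr (-1/3)}"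

text \<open>The trilinear integral \<open>\<integral>_{D_4} e^{it\<Phi>} f(\<xi>1) g(\<xi>2) h(\<xi>3) d\<xi>1 d\<xi>2\<close>
  (Lebesgue measure on the \<open>(\<xi>1,\<xi>2)\<close>-plane, via the gauge integral, which agrees with
  the Lebesgue integral for the bounded integrands on bounded sets arising here).\<close>
definition trilin :: "real \<Rightarrow> real \<Rightarrow> (real \<Rightarrow> complex) \<Rightarrow> (real \<Rightarrow> complex)
    \<Rightarrow> (real \<Rightarrow> complex) \<Rightarrow> real \<Rightarrow> complex" where
  "trilin t \<tau> f g h \<xi> = integral (D4 \<tau> \<xi>)
     (\<lambda>(\<xi>1, \<xi>2). cis (t * Phi \<xi> \<xi>1 \<xi>2) * f \<xi>1 * g \<xi>2 * h (\<xi> - \<xi>1 - \<xi>2))"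

end

theory Submission
  imports Defs
begin

lemma derivP:
  fixes \<nu> c y :: real
  shows "((\<lambda>y. (c-y) * (1+(c-y)^2) powr (-\<nu>/2)) has_real_derivative
     (-((1+(c-y)^2) powr (-\<nu>/2)) + \<nu>*(c-y)^2*(1+(c-y)^2) powr (-\<nu>/2-1))) (at y)"
proof -
  have pos: "0 < 1+(c-y)^2" by (simp add: add_pos_nonneg)
    have g: "\<And>Q. -(\<nu>*Q*(2*y-2*c)*(c-y)/2) = \<nu>*(c-y)^2*Q"
      by (simp add: power2_eq_square field_simps)
    show ?thesis
    apply (rule derivative_eq_intros refl | simp add: pos)+
    using g by simp
qed

lemma inner_bound:
  fixes \<nu> a b c :: real
  assumes "0 < \<nu>" "\<nu> < 1" "a \<le> b"
  shows "integral {a..b} (\<lambda>y. (1+(c-y)^2) powr (-\<nu>/2))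
     \<le> (\<bar>c-a\<bar> powr (1-\<nu>) + \<bar>c-b\<bar> powr (1-\<nu>)) / (1-\<nu>)"
proof -
  define P where "P y = -((c-y) * (1+(c-y)^2) powr (-\<nu>/2)) / (1-\<nu>)" for y
  define P' where "P' y = ((1+(c-y)^2) powr (-\<nu>/2) - \<nu>*(c-y)^2*(1+(c-y)^2) powr (-\<nu>/2-1)) / (1-\<nu>)" for y
  have der: "(P has_real_derivative P' y) (at y)" for y
  proof -
    have "((\<lambda>y. -((c-y) * (1+(c-y)^2) powr (-\<nu>/2)) / (1-\<nu>)) has_real_derivative
       (-(-((1+(c-y)^2) powr (-\<nu>/2)) + \<nu>*(c-y)^2*(1+(c-y)^2) powr (-\<nu>/2-1)))/(1-\<nu>)) (at y)"
      by (rule DERIV_cdivide[OF DERIV_minus[OF derivP]])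
    then show ?thesis unfolding P_def P'_def by (simp add: algebra_simps)
  qed
  have hasP: "(P' has_integral (P b - P a)) {a..b}"
    using assms(3) der
    by (intro fundamental_theorem_of_calculus)
       (auto intro: has_field_derivative_at_within simp: has_real_derivative_iff_has_vector_derivative[symmetric])
  have cont: "continuous_on {a..b} (\<lambda>y. (1+(c-y)^2) powr (-\<nu>/2))"
    by (intro continuous_intros) (auto simp: add_pos_nonneg add_nonneg_eq_0_iff)
  have int1: "(\<lambda>y. (1+(c-y)^2) powr (-\<nu>/2)) integrable_on {a..b}"
    using cont integrable_continuous_interval by blast
  have le: "(1+(c-y)^2) powr (-\<nu>/2) \<le> P' y" for y
  proof -
    define s where "s = 1+(c-y)^2"
    have s: "0 < s" unfolding s_def by (simp add: add_pos_nonneg)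
    have e: "s powr (-\<nu>/2) = s * s powr (-\<nu>/2-1)"
      using s by (simp add: powr_add[symmetric] powr_diff)
    have "(1-\<nu>) * s powr (-\<nu>/2) \<le> s powr (-\<nu>/2) - \<nu>*(c-y)^2 * s powr (-\<nu>/2-1)"
    proof -
      have "(1-\<nu>) * s powr (-\<nu>/2) = s powr (-\<nu>/2) - \<nu> * s * s powr (-\<nu>/2-1)"
        using e by (simp add: algebra_simps)
      moreover have "\<nu>*(c-y)^2 * s powr (-\<nu>/2-1) \<le> \<nu> * s * s powr (-\<nu>/2-1)"
        using assms(1) unfolding s_def by (intro mult_right_mono mult_left_mono) auto
      ultimately show ?thesis by linarith
    qed
    then show ?thesis unfolding P'_def s_def[symmetric] using assms(2)
      by (simp add: field_simps)
  qed
  have "integral {a..b} (\<lambda>y. (1+(c-y)^2) powr (-\<nu>/2)) \<le> integral {a..b} P'"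
    using int1 hasP le by (intro integral_le) auto
  also have "\<dots> = P b - P a" using hasP by (rule integral_unique)
  also have "\<dots> \<le> (\<bar>c-a\<bar> powr (1-\<nu>) + \<bar>c-b\<bar> powr (1-\<nu>)) / (1-\<nu>)"
  proof -
    have bnd: "\<bar>(c-y) * (1+(c-y)^2) powr (-\<nu>/2)\<bar> \<le> \<bar>c-y\<bar> powr (1-\<nu>)" for y
    proof (cases "c = y")
      case True then show ?thesis by simp
    next
      case False
      have u: "0 < \<bar>c-y\<bar>" using False by simp
      have "(1+(c-y)^2) powr (-\<nu>/2) \<le> (\<bar>c-y\<bar>^2) powr (-\<nu>/2)"
        using assms(1) u by (intro powr_mono2') auto
      also have "\<dots> = \<bar>c-y\<bar> powr (-\<nu>)"
      proof -
        have "\<bar>c-y\<bar>^2 = \<bar>c-y\<bar> powr 2" using u by (simp add: powr_realpow)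
        then have "(\<bar>c-y\<bar>^2) powr (-\<nu>/2) = \<bar>c-y\<bar> powr (2 * (-\<nu>/2))"
          by (simp only: powr_powr)
        then show ?thesis by simp
      qed
      finally have "\<bar>c-y\<bar> * (1+(c-y)^2) powr (-\<nu>/2) \<le> \<bar>c-y\<bar> * \<bar>c-y\<bar> powr (-\<nu>)"
        using u by simp
      also have "\<dots> = \<bar>c-y\<bar> powr (1-\<nu>)" using u by (simp add: powr_diff powr_minus divide_inverse)
      finally show ?thesis by (simp add: abs_mult)
    qed
    have "P b - P a = ((c-a) * (1+(c-a)^2) powr (-\<nu>/2) - (c-b) * (1+(c-b)^2) powr (-\<nu>/2)) / (1-\<nu>)"
      unfolding P_def by (simp add: diff_divide_distrib)
    also have "\<dots> \<le> (\<bar>c-a\<bar> powr (1-\<nu>) + \<bar>c-b\<bar> powr (1-\<nu>)) / (1-\<nu>)"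
      using bnd[of a] bnd[of b] assms(2) by (intro divide_right_mono) (auto simp: abs_le_iff)
    finally show ?thesis .
  qed
  finally show ?thesis .
qed
lemma box_bound:
  fixes \<nu> N \<xi> :: real
  assumes "0 < \<nu>" "\<nu> < 1" "0 < N" "\<bar>\<xi>\<bar> \<le> N"
  shows "integral (cbox (-N,-N) (N,N)) (\<lambda>p. (1+(\<xi> - fst p - snd p)^2) powr (-\<nu>/2))
     \<le> 2*N*(2*(3*N) powr (1-\<nu>)/(1-\<nu>))"
proof -
  define J where "J = 2*(3*N) powr (1-\<nu>)/(1-\<nu>)"
  have J0: "0 \<le> J" unfolding J_def using assms by simp
  have cont: "continuous_on (cbox (-N,-N) (N,N)) (\<lambda>p. (1+(\<xi> - fst p - snd p)^2) powr (-\<nu>/2))"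
    by (intro continuous_intros) (auto simp: add_pos_nonneg add_nonneg_eq_0_iff)
  have eq: "integral (cbox (-N,-N) (N,N)) (\<lambda>p. (1+(\<xi> - fst p - snd p)^2) powr (-\<nu>/2))
     = integral (cbox (-N) N) (\<lambda>x. integral (cbox (-N) N) (\<lambda>y. (1+(\<xi> - x - y)^2) powr (-\<nu>/2)))"
    using integral_prod_continuous[OF cont] by simp
  have inner: "integral {-N..N} (\<lambda>y. (1+(\<xi> - x - y)^2) powr (-\<nu>/2)) \<le> J"
    if x: "x \<in> {-N..N}" for x
  proof -
    have "integral {-N..N} (\<lambda>y. (1+((\<xi> - x) - y)^2) powr (-\<nu>/2))
        \<le> (\<bar>(\<xi>-x)-(-N)\<bar> powr (1-\<nu>) + \<bar>(\<xi>-x)-N\<bar> powr (1-\<nu>)) / (1-\<nu>)"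
      using assms by (intro inner_bound) auto
    also have "\<dots> \<le> ((3*N) powr (1-\<nu>) + (3*N) powr (1-\<nu>)) / (1-\<nu>)"
      using assms x by (intro divide_right_mono add_mono powr_mono2) auto
    finally show ?thesis unfolding J_def by simp
  qed
  show ?thesis
  proof (cases "(\<lambda>x. integral {-N..N} (\<lambda>y. (1+(\<xi> - x - y)^2) powr (-\<nu>/2))) integrable_on {-N..N}")
    case True
    have "integral {-N..N} (\<lambda>x. integral {-N..N} (\<lambda>y. (1+(\<xi> - x - y)^2) powr (-\<nu>/2)))
       \<le> integral {-N..N} (\<lambda>x. J)"
      using True inner by (intro integral_le) auto
    also have "\<dots> = 2*N*J" using assms by simp
    finally show ?thesis using eq unfolding J_def by simp
  next
    case False
    then show ?thesis using eq J0 assms unfolding J_def by (simp add: not_integrable_integral)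
  qed
qed

lemma neg_times1:
  fixes N :: "real set"
  assumes "N \<in> null_sets lebesgue"
  shows "negligible (N \<times> (UNIV::real set))"
proof -
  obtain N' where N': "N' \<in> null_sets lborel" "N \<subseteq> N'"
    using assms unfolding null_sets_completion_iff2 by blast
  have "N' \<times> (UNIV::real set) \<in> null_sets (lborel \<Otimes>\<^sub>M lborel)"
    using N'(1) by (intro lborel.times_in_null_sets1) auto
  then have "N' \<times> (UNIV::real set) \<in> null_sets (lebesgue :: (real\<times>real) measure)"
    unfolding lborel_prod by (rule null_sets_completionI)
  then have "negligible (N' \<times> (UNIV::real set))" by (simp add: negligible_iff_null_sets)
  then show ?thesis by (rule negligible_subset) (use N'(2) in auto)
qed

lemma neg_times2:
  fixes N :: "real set"
  assumes "N \<in> null_sets lebesgue"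
  shows "negligible ((UNIV::real set) \<times> N)"
proof -
  obtain N' where N': "N' \<in> null_sets lborel" "N \<subseteq> N'"
    using assms unfolding null_sets_completion_iff2 by blast
  have "(UNIV::real set) \<times> N' \<in> null_sets (lborel \<Otimes>\<^sub>M lborel)"
    using N'(1) by (intro lborel.times_in_null_sets2) auto
  then have "(UNIV::real set) \<times> N' \<in> null_sets (lebesgue :: (real\<times>real) measure)"
    unfolding lborel_prod by (rule null_sets_completionI)
  then have "negligible ((UNIV::real set) \<times> N')" by (simp add: negligible_iff_null_sets)
  then show ?thesis by (rule negligible_subset) (use N'(2) in auto)
qed

lemma neg_diag:
  fixes N :: "real set" and \<xi> :: real
  assumes "negligible (N \<times> (UNIV::real set))"
  shows "negligible {p::real\<times>real. \<xi> - fst p - snd p \<in> N}"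
proof -
  define \<phi> :: "real\<times>real \<Rightarrow> real\<times>real" where "\<phi> p = (\<xi> - fst p - snd p, snd p)" for p
  have d: "\<phi> differentiable_on (N \<times> UNIV)"
    unfolding \<phi>_def differentiable_on_def
    by (intro ballI differentiable_Pair differentiable_diff differentiable_const bounded_linear_imp_differentiable bounded_linear_fst bounded_linear_snd)
  have "negligible (\<phi> ` (N \<times> UNIV))"
    by (rule negligible_differentiable_image_negligible[OF _ assms d]) simp
  moreover have "\<phi> ` (N \<times> UNIV) = {p::real\<times>real. \<xi> - fst p - snd p \<in> N}"
  proof (intro set_eqI iffI)
    fix p :: "real\<times>real" assume "p \<in> {p::real\<times>real. \<xi> - fst p - snd p \<in> N}"
    then have "(\<xi> - fst p - snd p, snd p) \<in> N \<times> UNIV" "p = \<phi> (\<xi> - fst p - snd p, snd p)"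
      by (auto simp: \<phi>_def prod_eq_iff)
    then show "p \<in> \<phi> ` (N \<times> UNIV)" by blast
  next
    fix p :: "real\<times>real" assume "p \<in> \<phi> ` (N \<times> UNIV)"
    then obtain q where "q \<in> N \<times> UNIV" "p = \<phi> q" by blast
    then show "p \<in> {p::real\<times>real. \<xi> - fst p - snd p \<in> N}"
      by (cases q) (simp add: \<phi>_def)
  qed
  ultimately show ?thesis by simp
qed


lemma jap_powr: "japanese u powr r = (1+u^2) powr (r/2)"
proof -
  have "japanese u = (1+u^2) powr (1/2)"
    unfolding japanese_def by (simp add: powr_half_sqrt add_nonneg_nonneg)
  then show ?thesis by (simp add: powr_powr)
qed

lemma null_not_UNIV:
  assumes "(N::real set) \<in> null_sets lebesgue"
  shows "\<exists>x. x \<notin> N"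
proof (rule ccontr)
  assume "\<not> (\<exists>x. x \<notin> N)"
  then have "N = UNIV" by auto
  then have "emeasure (completion lborel) (UNIV::real set) = 0" using assms by auto
  then show False by (simp add: emeasure_completion)
qed

lemma main_bound:
  fixes \<mu> \<nu> t \<tau> \<xi> Mf Mg Mh :: real and f g h :: "real \<Rightarrow> complex"
  assumes "0 < \<mu>" "\<mu> < \<nu>" "\<nu> < 1/2" "0 < \<tau>" "\<tau> < 1"
    and Nf: "Nf \<in> null_sets lebesgue" "\<And>x. x \<notin> Nf \<Longrightarrow> norm (f x) \<le> Mf"
    and Ng: "Ng \<in> null_sets lebesgue" "\<And>x. x \<notin> Ng \<Longrightarrow> norm (g x) \<le> Mg"
    and Nh: "Nh \<in> null_sets lebesgue" "\<And>x. x \<notin> Nh \<Longrightarrow> japanese x powr \<nu> * norm (h x) \<le> Mh"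
    and M0: "0 \<le> Mf" "0 \<le> Mg" "0 \<le> Mh"
  shows "japanese \<xi> powr \<mu> * norm (complex_of_real \<xi> * trilin t \<tau> f g h \<xi>)
           \<le> 48 * \<tau> powr (-1 + (\<nu> - \<mu>) / 3) * Mf * Mg * Mh"
proof -
  define N where "N = \<tau> powr (-1/3)"
  define K where "K = Mf * Mg * Mh"
  have K0: "0 \<le> K" unfolding K_def using M0 by simp
  have N1: "1 < N"
  proof -
    have "\<tau> powr (1/3) < 1" using powr_less_mono2[of "1/3" \<tau> 1] assms(4,5) by simp
    moreover have "N = 1 / \<tau> powr (1/3)" unfolding N_def by (simp add: powr_minus_divide)
    moreover have "0 < \<tau> powr (1/3)" using assms(4) by simp
    ultimately show ?thesis by simp
  qed
  have NP: "N powr (3 + \<mu> - \<nu>) = \<tau> powr (-1 + (\<nu> - \<mu>) / 3)"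
  proof -
    have e: "-1/3*(3+\<mu>-\<nu>) = -1 + (\<nu> - \<mu>) / 3" by (simp add: field_simps)
    show ?thesis unfolding N_def powr_powr e ..
  qed
  have RHS0: "0 \<le> 48 * \<tau> powr (-1 + (\<nu> - \<mu>) / 3) * Mf * Mg * Mh"
    using M0 by simp
  define w where "w p = (1+(\<xi> - fst p - snd p)^2) powr (-\<nu>/2)" for p :: "real \<times> real"
  define box where "box = cbox (-N,-N) (N,N)"
  define I where "I = integral box w"
  have wcont: "continuous_on box w"
    unfolding w_def box_def by (intro continuous_intros) (auto simp: add_pos_nonneg add_nonneg_eq_0_iff)
  have wint: "w integrable_on box" unfolding box_def using wcont[unfolded box_def] by (rule integrable_continuous)
  have w0: "0 \<le> w p" for p unfolding w_def by simp
  have I0: "0 \<le> I" unfolding I_def using wint w0 by (intro integral_nonneg) auto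
  have D4sub: "D4 \<tau> \<xi> \<subseteq> box"
  proof
    fix p assume "p \<in> D4 \<tau> \<xi>"
    then obtain x y where p: "p = (x,y)" "\<bar>x\<bar> + \<bar>y\<bar> + \<bar>\<xi> - x - y\<bar> < N"
      unfolding D4_def N_def by auto
    then show "p \<in> box" unfolding box_def by (auto simp: cbox_def inner_prod_def Basis_prod_def)
  qed
  show ?thesis
  proof (cases "N \<le> \<bar>\<xi>\<bar>")
    case True
    have "D4 \<tau> \<xi> = {}"
    proof (intro equals0I)
      fix p assume "p \<in> D4 \<tau> \<xi>"
      then obtain x y where p: "\<bar>x\<bar> + \<bar>y\<bar> + \<bar>\<xi> - x - y\<bar> < N"
        unfolding D4_def N_def by auto
      have "\<bar>\<xi>\<bar> \<le> \<bar>x\<bar> + \<bar>y\<bar> + \<bar>\<xi> - x - y\<bar>" by linarith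
      then show False using p True by linarith
    qed
    then have "trilin t \<tau> f g h \<xi> = 0" unfolding trilin_def by simp
    then show ?thesis using RHS0 by simp
  next
    case False
    then have xiN: "\<bar>\<xi>\<bar> < N" by simp
    have T: "norm (trilin t \<tau> f g h \<xi>) \<le> K * I"
    proof -
      define F where "F = (\<lambda>(\<xi>1, \<xi>2). cis (t * Phi \<xi> \<xi>1 \<xi>2) * f \<xi>1 * g \<xi>2 * h (\<xi> - \<xi>1 - \<xi>2))"
      have tri: "trilin t \<tau> f g h \<xi> = integral (D4 \<tau> \<xi>) F" unfolding trilin_def F_def by simp
      show ?thesis
      proof (cases "F integrable_on D4 \<tau> \<xi>")
        case False
        then show ?thesis using tri K0 I0 by (simp add: not_integrable_integral)
      next
        case True
        define f' where "f' x = (if x \<in> Nf then 0 else f x)" for x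
        define g' where "g' x = (if x \<in> Ng then 0 else g x)" for x
        define h' where "h' x = (if x \<in> Nh then 0 else h x)" for x
        define G where "G = (\<lambda>(\<xi>1, \<xi>2). cis (t * Phi \<xi> \<xi>1 \<xi>2) * f' \<xi>1 * g' \<xi>2 * h' (\<xi> - \<xi>1 - \<xi>2))"
        define S where "S = (Nf \<times> (UNIV::real set)) \<union> ((UNIV::real set) \<times> Ng) \<union> {p::real\<times>real. \<xi> - fst p - snd p \<in> Nh}"
        have negS: "negligible S"
          unfolding S_def
          by (intro negligible_Un neg_times1 neg_times2 neg_diag[OF neg_times1[OF Nh(1)]] Nf(1) Ng(1))
        have GF: "G p = F p" if "p \<in> D4 \<tau> \<xi> - S" for p
          using that unfolding S_def G_def F_def f'_def g'_def h'_def by (cases p) auto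
        have eqFG: "integral (D4 \<tau> \<xi>) F = integral (D4 \<tau> \<xi>) G"
          by (rule integral_spike[OF negS GF])
        have Gint: "G integrable_on D4 \<tau> \<xi>"
          by (rule integrable_spike[OF True negS GF])
        define G0 where "G0 p = (if p \<in> D4 \<tau> \<xi> then G p else 0)" for p
        have D4box: "D4 \<tau> \<xi> \<inter> box = D4 \<tau> \<xi>" using D4sub by blast
        have eq0: "integral box G0 = integral (D4 \<tau> \<xi>) G"
          unfolding G0_def integral_restrict_Int D4box ..
        have G0int: "G0 integrable_on box"
          unfolding G0_def integrable_restrict_Int D4box by (rule Gint)
        have Kwint: "(\<lambda>p. K * w p) integrable_on box"
          using integrable_cmul[OF wint, of K] by simp
        have pw: "norm (G0 p) \<le> K * w p" if "p \<in> box" for p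
        proof (cases "p \<in> D4 \<tau> \<xi>")
          case False
          then show ?thesis unfolding G0_def using K0 w0 by simp
        next
          case True
          obtain x y where p: "p = (x, y)" by (cases p)
          have bf: "norm (f' x) \<le> Mf" unfolding f'_def using Nf(2) M0 by auto
          have bg: "norm (g' y) \<le> Mg" unfolding g'_def using Ng(2) M0 by auto
          have bh: "norm (h' (\<xi> - x - y)) \<le> Mh * w p"
          proof (cases "\<xi> - x - y \<in> Nh")
            case True then show ?thesis unfolding h'_def using M0 w0 by simp
          next
            case False
            define u where "u = \<xi> - x - y"
            have jp: "0 < japanese u powr \<nu>" unfolding japanese_def by (simp add: add_nonneg_eq_0_iff)
            have "japanese u powr \<nu> * norm (h u) \<le> Mh" using Nh(2) False unfolding u_def by simp
            then have "norm (h u) \<le> Mh / japanese u powr \<nu>" using jp by (simp add: field_simps)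
            also have "\<dots> = Mh * japanese u powr (-\<nu>)"
              by (simp add: powr_minus divide_inverse)
            also have "\<dots> = Mh * w p" unfolding w_def p jap_powr u_def by simp
            finally show ?thesis using False unfolding h'_def u_def by simp
          qed
          have "norm (G0 p) = norm (f' x) * norm (g' y) * norm (h' (\<xi> - x - y))"
            using True unfolding G0_def G_def p by (simp add: norm_mult)
          also have "\<dots> \<le> Mf * Mg * (Mh * w p)"
            using bf bg bh M0 by (intro mult_mono) auto
          finally show ?thesis unfolding K_def by (simp add: mult.assoc)
        qed
        have "norm (integral box G0) \<le> integral box (\<lambda>p. K * w p)"
          by (rule integral_norm_bound_integral[OF G0int Kwint pw])
        also have "\<dots> = K * I" unfolding I_def by simp
        finally show ?thesis using tri eqFG eq0 by simp
      qed
    qed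
    have Ib: "I \<le> 2*N*(2*(3*N) powr (1-\<nu>)/(1-\<nu>))"
      unfolding I_def box_def w_def using box_bound[of \<nu> N \<xi>] assms N1 xiN by simp
    have A: "japanese \<xi> powr \<mu> \<le> 2 * N powr \<mu>"
    proof -
      have "japanese \<xi> \<le> 2 * N"
      proof -
        have "1 + \<xi>^2 \<le> (2*N)^2"
        proof -
          have "\<xi>^2 \<le> N^2" using xiN power_mono[of "\<bar>\<xi>\<bar>" N 2] by simp
          moreover have "1 \<le> N^2" using N1 by simp
          ultimately show ?thesis by (simp add: power_mult_distrib)
        qed
        then have "sqrt (1 + \<xi>^2) \<le> sqrt ((2*N)^2)" by (rule real_sqrt_le_mono)
        also have "sqrt ((2*N)^2) = 2*N" using N1 real_sqrt_abs[of "2*N"] by simp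
        finally show ?thesis unfolding japanese_def .
      qed
      then have "japanese \<xi> powr \<mu> \<le> (2*N) powr \<mu>"
        using assms(1) by (intro powr_mono2) (auto simp: japanese_def)
      also have "\<dots> = 2 powr \<mu> * N powr \<mu>" using N1 by (simp add: powr_mult)
      also have "\<dots> \<le> 2 * N powr \<mu>"
      proof -
        have "2 powr \<mu> \<le> 2 powr (1::real)" using assms by (intro powr_mono) auto
        then show ?thesis by (intro mult_right_mono) auto
      qed
      finally show ?thesis .
    qed
    have Ib2: "I \<le> 12 * N * N powr (1-\<nu>) * 2"
    proof -
      have "(3*N) powr (1-\<nu>) = 3 powr (1-\<nu>) * N powr (1-\<nu>)" using N1 by (simp add: powr_mult)
      also have "\<dots> \<le> 3 * N powr (1-\<nu>)"
      proof -
        have "3 powr (1-\<nu>) \<le> 3 powr (1::real)" using assms by (intro powr_mono) auto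
        then show ?thesis by (intro mult_right_mono) auto
      qed
      finally have a: "(3*N) powr (1-\<nu>) \<le> 3 * N powr (1-\<nu>)" .
      have b: "1/(1-\<nu>) \<le> 2" using assms by (simp add: field_simps)
      have "2*N*(2*(3*N) powr (1-\<nu>)/(1-\<nu>)) = 4*N*(3*N) powr (1-\<nu>) * (1/(1-\<nu>))" by simp
      also have "\<dots> \<le> 4*N*(3 * N powr (1-\<nu>)) * 2"
        using a b N1 assms(2,3) by (intro mult_mono) auto
      finally show ?thesis using Ib by simp
    qed
    have T2: "norm (trilin t \<tau> f g h \<xi>) \<le> K * (12 * N * N powr (1-\<nu>) * 2)"
      using T Ib2 K0 by (meson order_trans mult_left_mono)
    have "japanese \<xi> powr \<mu> * norm (complex_of_real \<xi> * trilin t \<tau> f g h \<xi>)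
        = japanese \<xi> powr \<mu> * (\<bar>\<xi>\<bar> * norm (trilin t \<tau> f g h \<xi>))"
      by (simp add: norm_mult)
    also have "\<dots> \<le> (2 * N powr \<mu>) * (N * (K * (12 * N * N powr (1-\<nu>) * 2)))"
      using A xiN T2 K0 I0 N1
      by (intro mult_mono mult_left_mono) auto
    also have "\<dots> = 48 * K * (N powr \<mu> * N powr 1 * N powr 1 * N powr (1-\<nu>))" using N1 by simp
    also have "N powr \<mu> * N powr 1 * N powr 1 * N powr (1-\<nu>) = N powr (3 + \<mu> - \<nu>)"
    proof -
      have e: "\<mu> + 1 + 1 + (1-\<nu>) = 3 + \<mu> - \<nu>" by simp
      show ?thesis unfolding powr_add[symmetric] e ..
    qed
    finally show ?thesis unfolding NP K_def by (simp add: mult_ac)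
  qed
qed

theorem lemma3p3:
  fixes \<mu> \<nu> :: real
  assumes "0 < \<mu>" "\<mu> < \<nu>" "\<nu> < 1/2"
  shows "\<exists>C>0. \<forall>t \<tau> (f :: real \<Rightarrow> complex) (g :: real \<Rightarrow> complex) (h :: real \<Rightarrow> complex) Mf Mg Mh.
           0 < t \<and> t < 1 \<and> 0 < \<tau> \<and> \<tau> < 1 \<and>
           f \<in> borel_measurable lebesgue \<and> g \<in> borel_measurable lebesgue \<and>
           h \<in> borel_measurable lebesgue \<and>
           (AE x in lebesgue. norm (f x) \<le> Mf) \<and>
           (AE x in lebesgue. norm (g x) \<le> Mg) \<and>
           (AE x in lebesgue. japanese x powr \<nu> * norm (h x) \<le> Mh)
           \<longrightarrow> (AE \<xi> in lebesgue.
                 japanese \<xi> powr \<mu> * norm (complex_of_real \<xi> * trilin t \<tau> f g h \<xi>)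
                   \<le> C * \<tau> powr (-1 + (\<nu> - \<mu>) / 3) * Mf * Mg * Mh)"
proof (intro exI[of _ 48] conjI allI impI)
  show "(0::real) < 48" by simp
  fix t \<tau> :: real and f g h :: "real \<Rightarrow> complex" and Mf Mg Mh :: real
  assume H: "0 < t \<and> t < 1 \<and> 0 < \<tau> \<and> \<tau> < 1 \<and>
           f \<in> borel_measurable lebesgue \<and> g \<in> borel_measurable lebesgue \<and>
           h \<in> borel_measurable lebesgue \<and>
           (AE x in lebesgue. norm (f x) \<le> Mf) \<and>
           (AE x in lebesgue. norm (g x) \<le> Mg) \<and>
           (AE x in lebesgue. japanese x powr \<nu> * norm (h x) \<le> Mh)"
  then have tau: "0 < \<tau>" "\<tau> < 1"
    and AEf: "AE x in lebesgue. norm (f x) \<le> Mf"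
    and AEg: "AE x in lebesgue. norm (g x) \<le> Mg"
    and AEh: "AE x in lebesgue. japanese x powr \<nu> * norm (h x) \<le> Mh" by auto
  obtain Nf where Nf: "Nf \<in> null_sets lebesgue" "\<And>x. x \<notin> Nf \<Longrightarrow> norm (f x) \<le> Mf"
    using AE_E3[OF AEf] by auto
  obtain Ng where Ng: "Ng \<in> null_sets lebesgue" "\<And>x. x \<notin> Ng \<Longrightarrow> norm (g x) \<le> Mg"
    using AE_E3[OF AEg] by auto
  obtain Nh where Nh: "Nh \<in> null_sets lebesgue" "\<And>x. x \<notin> Nh \<Longrightarrow> japanese x powr \<nu> * norm (h x) \<le> Mh"
    using AE_E3[OF AEh] by auto
  have Mf0: "0 \<le> Mf"
  proof -
    obtain x where "x \<notin> Nf" using null_not_UNIV[OF Nf(1)] by blast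
    then have "norm (f x) \<le> Mf" by (rule Nf(2))
    then show ?thesis by (meson norm_ge_zero order_trans)
  qed
  have Mg0: "0 \<le> Mg"
  proof -
    obtain x where "x \<notin> Ng" using null_not_UNIV[OF Ng(1)] by blast
    then have "norm (g x) \<le> Mg" by (rule Ng(2))
    then show ?thesis by (meson norm_ge_zero order_trans)
  qed
  have Mh0: "0 \<le> Mh"
  proof -
    obtain x where "x \<notin> Nh" using null_not_UNIV[OF Nh(1)] by blast
    then have "japanese x powr \<nu> * norm (h x) \<le> Mh" by (rule Nh(2))
    moreover have "0 \<le> japanese x powr \<nu> * norm (h x)" by simp
    ultimately show ?thesis by linarith
  qed
  show "AE \<xi> in lebesgue.
                 japanese \<xi> powr \<mu> * norm (complex_of_real \<xi> * trilin t \<tau> f g h \<xi>)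
                   \<le> 48 * \<tau> powr (-1 + (\<nu> - \<mu>) / 3) * Mf * Mg * Mh"
    by (rule AE_I2, rule main_bound[OF assms tau Nf Ng Nh Mf0 Mg0 Mh0])
qed

end
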